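(* Let $n\ge 3$, $\beta\ge1$, $0\le\alpha<n-1$, and $N\ge n+\beta$. Then for every $x\in\mathbb{R}^n$ and every fixed $R\ge0$, $$\int_{\mathbb{R}^n}\frac{\langle z\rangle^{-N}}{|x-z|^\alpha\langle |x-z|+R\rangle\langle |x-z|-R\rangle^\beta}\,dz\lesssim\frac{1}{\langle x\rangle^\alpha\langle |x|+R\rangle\langle R-|x|\rangle^\beta},$$ with implicit constant independent of $x$ and $R$.
   Context: $\langle x\rangle=(1+|x|^2)^{1/2}$. *)

theory Defs
  imports "HOL-Analysis.Analysis"
begin

text \<open>Japanese bracket: jb t = (1 + t^2)^(1/2) for real t; for vectors use jb (norm x).\<close>
definition jb :: "real \<Rightarrow> real" where
  "jb t = sqrt (1 + t\<^sup>2)"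

end

theory Submission
  imports Defs
begin



lemma geo_ennreal:
  fixes c q :: real assumes "0 \<le> c" "0 \<le> q" "q < 1"
  shows "(\<Sum>k. ennreal (c * q ^ k)) = ennreal (c / (1 - q))"
proof -
  have "(\<lambda>k. c * q ^ k) sums (c * (1 / (1 - q)))"
    by (rule sums_mult, rule geometric_sums) (use assms in auto)
  hence "(\<lambda>k. ennreal (c * q ^ k)) sums ennreal (c / (1 - q))"
    using assms by (subst sums_ennreal) auto
  thus ?thesis by (rule sums_unique[symmetric])
qed

lemma translate_nn:
  fixes x :: "'a::euclidean_space" and f :: "'a \<Rightarrow> ennreal"
  assumes "f \<in> borel_measurable borel"
  shows "(\<integral>\<^sup>+ z. f (x - z) \<partial>lborel) = (\<integral>\<^sup>+ y. f y \<partial>lborel)"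
proof -
  have "lborel = density (distr lborel borel (\<lambda>z. x + (-1) *\<^sub>R z)) (\<lambda>_. \<bar>-1::real\<bar>^DIM('a))"
    by (rule lborel_affine) simp
  hence d: "distr lborel borel (\<lambda>z. x - z) = (lborel :: 'a measure)"
    by (simp add: density_1)
  have "(\<integral>\<^sup>+ y. f y \<partial>lborel) = (\<integral>\<^sup>+ y. f y \<partial>(distr lborel borel (\<lambda>z. x - z)))"
    by (simp add: d)
  also have "\<dots> = (\<integral>\<^sup>+ z. f (x - z) \<partial>lborel)"
    by (rule nn_integral_distr) (use assms in auto)
  finally show ?thesis by simp
qed

lemma shell_meas: "{y::'a::euclidean_space. c < norm y \<and> norm y \<le> d} \<in> sets lborel"
  by measurable


lemma term_id:
  fixes \<rho> a d V :: real and k D :: nat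
  assumes "\<rho> > 0" "real D = d"
  shows "(\<rho> / 2 ^ Suc k) powr (-a) * (V * (\<rho> / 2 ^ k) ^ D)
       = V * 2 powr a * \<rho> powr (d - a) * (2 powr (a - d)) ^ k"
proof -
  have e1: "(\<rho> / 2 ^ Suc k) powr (-a) = \<rho> powr (-a) * 2 powr (a * (k+1))"
    using assms by (simp add: powr_divide powr_minus_divide powr_realpow[symmetric] powr_powr powr_mult powr_add field_simps)
  have e2: "(\<rho> / 2 ^ k) ^ D = \<rho> powr d * 2 powr (- d * k)"
    using assms by (simp add: powr_realpow[symmetric] powr_divide powr_powr powr_minus_divide field_simps flip: powr_realpow)
  have e3: "(2 powr (a - d)) ^ k = (2::real) powr ((a - d) * k)"
    by (simp add: powr_realpow[symmetric] powr_powr flip: powr_powr)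
  show ?thesis unfolding e1 e2 e3
    by (simp add: powr_add[symmetric] powr_diff algebra_simps) (simp add: powr_add powr_diff powr_minus_divide field_simps)
qed

lemma le_suminf_ennreal: "(f::nat \<Rightarrow> ennreal) k \<le> (\<Sum>i. f i)"
  using sum_le_suminf[OF summableI, of "{k}" f] by simp

lemma exists_dyadic_down:
  fixes \<rho> t :: real assumes "0 < t" "t \<le> \<rho>"
  shows "\<exists>k. \<rho> / 2 ^ Suc k < t \<and> t \<le> \<rho> / 2 ^ k"
proof -
  define P where "P m \<longleftrightarrow> \<rho> / 2 ^ m < t" for m :: nat
  obtain m where "\<rho> / t < 2 ^ m" using real_arch_pow[of 2 "\<rho> / t"] by auto
  hence "P m" using assms by (simp add: P_def field_simps)
  define k0 where "k0 = (LEAST m. P m)"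
  have Pk0: "P k0" unfolding k0_def by (rule LeastI) fact
  have "\<not> P 0" using assms by (simp add: P_def)
  hence "k0 \<noteq> 0" using Pk0 by (metis)
  then obtain k where k: "k0 = Suc k" by (cases k0) auto
  have "\<not> P k" using not_less_Least[of k P] k unfolding k0_def by auto
  thus ?thesis using Pk0 k by (auto simp: P_def not_less)
qed

lemma ball_pow:
  fixes a \<rho> :: real
  assumes a0: "0 \<le> a" and an: "a < real DIM('a)" and \<rho>: "0 \<le> \<rho>"
  shows "(\<integral>\<^sup>+ y. ennreal (indicator (cball (0::'a::euclidean_space) \<rho>) y * norm y powr (-a)) \<partial>lborel)
        \<le> ennreal (unit_ball_vol DIM('a) * 2 powr a / (1 - 2 powr (a - DIM('a))) * \<rho> powr (DIM('a) - a))"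
proof -
  define S where "S k = {y::'a. \<rho> / 2^(Suc k) < norm y \<and> norm y \<le> \<rho> / 2^k}" for k
  define c where "c k = (\<rho> / 2^(Suc k)) powr (-a)" for k
  define V where "V = unit_ball_vol (real DIM('a))"
  define q where "q = (2::real) powr (a - DIM('a))"
  have V0: "V \<ge> 0" unfolding V_def by simp
  have q0: "0 \<le> q" "q < 1" unfolding q_def using an powr_less_mono[of "a - DIM('a)" 0 2] by auto
  have Smeas[measurable]: "S k \<in> sets lborel" for k unfolding S_def by measurable
  have c0: "c k \<ge> 0" for k unfolding c_def by simp
  have pt: "ennreal (indicator (cball 0 \<rho>) y * norm y powr (-a)) \<le> (\<Sum>k. ennreal (c k * indicator (S k) y))" for y :: 'a
  proof (cases "y \<noteq> 0 \<and> norm y \<le> \<rho>")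
    case True
    then obtain k where k: "\<rho> / 2 ^ Suc k < norm y" "norm y \<le> \<rho> / 2 ^ k"
      using exists_dyadic_down[of "norm y" \<rho>] by auto
    have yS: "y \<in> S k" using k unfolding S_def by auto
    have "norm y powr (-a) \<le> c k" unfolding c_def
      by (rule powr_mono2') (use k a0 \<rho> in auto)
    hence "ennreal (indicator (cball 0 \<rho>) y * norm y powr (-a)) \<le> ennreal (c k * indicator (S k) y)"
      using yS True by (auto intro!: ennreal_leI simp: indicator_def)
    also have "\<dots> \<le> (\<Sum>k. ennreal (c k * indicator (S k) y))" by (rule le_suminf_ennreal)
    finally show ?thesis .
  next
    case False thus ?thesis by (auto simp: indicator_def)
  qed
  have "(\<integral>\<^sup>+ y. ennreal (indicator (cball (0::'a) \<rho>) y * norm y powr (-a)) \<partial>lborel)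
     \<le> (\<integral>\<^sup>+ y. (\<Sum>k. ennreal (c k * indicator (S k) y)) \<partial>lborel)"
    by (rule nn_integral_mono) (rule pt)
  also have "\<dots> = (\<Sum>k. \<integral>\<^sup>+ y. ennreal (c k * indicator (S k) y) \<partial>lborel)"
    by (rule nn_integral_suminf) measurable
  also have "\<dots> \<le> (\<Sum>k. ennreal (c k * (V * (\<rho> / 2 ^ k) ^ DIM('a))))"
  proof (rule suminf_le)
    fix k
    have "(\<integral>\<^sup>+ y. ennreal (c k * indicator (S k) y) \<partial>lborel) = ennreal (c k) * emeasure lborel (S k)"
    proof -
      have "\<And>y. ennreal (c k * indicator (S k) y) = ennreal (c k) * indicator (S k) y"
        by (simp add: indicator_def)
      hence "(\<integral>\<^sup>+ y. ennreal (c k * indicator (S k) y) \<partial>lborel) = (\<integral>\<^sup>+ y. ennreal (c k) * indicator (S k) y \<partial>lborel)"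
        by presburger
      also have "\<dots> = ennreal (c k) * emeasure lborel (S k)"
        by (rule nn_integral_cmult_indicator) (use Smeas in simp)
      finally show ?thesis .
    qed
    also have "emeasure lborel (S k) \<le> emeasure lborel (cball (0::'a) (\<rho> / 2 ^ k))"
      by (rule emeasure_mono) (auto simp: S_def)
    also have "\<dots> = ennreal (V * (\<rho> / 2 ^ k) ^ DIM('a))"
      unfolding V_def using \<rho> by (simp add: emeasure_cball)
    finally show "(\<integral>\<^sup>+ y. ennreal (c k * indicator (S k) y) \<partial>lborel) \<le> ennreal (c k * (V * (\<rho> / 2 ^ k) ^ DIM('a)))"
      using c0 by (simp add: ennreal_mult' mult_left_mono)
  qed auto
  also have "\<dots> = (\<Sum>k. ennreal (V * 2 powr a * \<rho> powr (DIM('a) - a) * q ^ k))"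
  proof (cases "\<rho> = 0")
    case True thus ?thesis by (simp add: c_def)
  next
    case False thus ?thesis unfolding c_def q_def
      by (subst term_id[where d = "real DIM('a)"]) (use \<rho> in auto)
  qed
  also have "\<dots> = ennreal (V * 2 powr a * \<rho> powr (DIM('a) - a) / (1 - q))"
    by (rule geo_ennreal) (use V0 q0 in auto)
  finally show ?thesis unfolding V_def q_def by (simp add: field_simps)
qed


lemma term_id2:
  fixes \<rho> M d V :: real and k D :: nat
  assumes "\<rho> > 0" "real D = d"
  shows "(\<rho> * 2 ^ k) powr (-M) * (V * (\<rho> * 2 ^ Suc k) ^ D)
       = V * 2 powr d * \<rho> powr (d - M) * (2 powr (d - M)) ^ k"
proof -
  have e1: "(\<rho> * 2 ^ k) powr (-M) = \<rho> powr (-M) * 2 powr (- M * k)"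
    using assms by (simp add: powr_mult powr_realpow[symmetric] powr_powr mult.commute)
  have e2: "(\<rho> * 2 ^ Suc k) ^ D = \<rho> powr d * 2 powr (d * (k + 1))"
    using assms by (simp add: powr_realpow[symmetric] powr_mult powr_powr flip: powr_realpow) (simp add: powr_add[symmetric] algebra_simps)
  have e3: "(2 powr (d - M)) ^ k = (2::real) powr ((d - M) * k)"
    by (simp add: powr_realpow[symmetric] powr_powr flip: powr_powr)
  show ?thesis unfolding e1 e2 e3
    by (simp add: powr_add[symmetric] powr_diff algebra_simps) (simp add: powr_add powr_diff powr_minus_divide field_simps)
qed

lemma exists_dyadic_up:
  fixes \<rho> t :: real assumes "0 < \<rho>" "\<rho> < t"
  shows "\<exists>k. \<rho> * 2 ^ k < t \<and> t \<le> \<rho> * 2 ^ Suc k"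
proof -
  define P where "P m \<longleftrightarrow> t \<le> \<rho> * 2 ^ m" for m :: nat
  obtain m where "t / \<rho> < 2 ^ m" using real_arch_pow[of 2 "t / \<rho>"] by auto
  hence "P m" using assms by (simp add: P_def field_simps)
  define k0 where "k0 = (LEAST m. P m)"
  have Pk0: "P k0" unfolding k0_def by (rule LeastI) fact
  have "\<not> P 0" using assms by (simp add: P_def)
  hence "k0 \<noteq> 0" using Pk0 by (metis)
  then obtain k where k: "k0 = Suc k" by (cases k0) auto
  have "\<not> P k" using not_less_Least[of k P] k unfolding k0_def by auto
  thus ?thesis using Pk0 k by (auto simp: P_def not_le)
qed

lemma tail_pow:
  fixes M \<rho> :: real
  assumes Mn: "real DIM('a) < M" and \<rho>: "0 < \<rho>"
  shows "(\<integral>\<^sup>+ y. ennreal (indicator {y::'a::euclidean_space. \<rho> < norm y} y * norm y powr (-M)) \<partial>lborel)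
        \<le> ennreal (unit_ball_vol DIM('a) * 2 powr DIM('a) / (1 - 2 powr (DIM('a) - M)) * \<rho> powr (DIM('a) - M))"
proof -
  define S where "S k = {y::'a. \<rho> * 2^k < norm y \<and> norm y \<le> \<rho> * 2^(Suc k)}" for k
  define c where "c k = (\<rho> * 2^k) powr (-M)" for k
  define V where "V = unit_ball_vol (real DIM('a))"
  define q where "q = (2::real) powr (DIM('a) - M)"
  have V0: "V \<ge> 0" unfolding V_def by simp
  have q0: "0 \<le> q" "q < 1" unfolding q_def using Mn powr_less_mono[of "DIM('a) - M" 0 2] by auto
  have Smeas[measurable]: "S k \<in> sets lborel" for k unfolding S_def by measurable
  have c0: "c k \<ge> 0" for k unfolding c_def by simp
  have M0: "M \<ge> 0" using Mn by linarith
  have pt: "ennreal (indicator {y. \<rho> < norm y} y * norm y powr (-M)) \<le> (\<Sum>k. ennreal (c k * indicator (S k) y))" for y :: 'a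
  proof (cases "\<rho> < norm y")
    case True
    then obtain k where k: "\<rho> * 2 ^ k < norm y" "norm y \<le> \<rho> * 2 ^ Suc k"
      using exists_dyadic_up[of \<rho> "norm y"] \<rho> by auto
    have yS: "y \<in> S k" using k unfolding S_def by auto
    have "norm y powr (-M) \<le> c k" unfolding c_def
      by (rule powr_mono2') (use k M0 \<rho> in auto)
    hence "ennreal (indicator {y. \<rho> < norm y} y * norm y powr (-M)) \<le> ennreal (c k * indicator (S k) y)"
      using yS True by (auto intro!: ennreal_leI simp: indicator_def)
    also have "\<dots> \<le> (\<Sum>k. ennreal (c k * indicator (S k) y))" by (rule le_suminf_ennreal)
    finally show ?thesis .
  next
    case False thus ?thesis by (auto simp: indicator_def)
  qed
  have "(\<integral>\<^sup>+ y. ennreal (indicator {y::'a. \<rho> < norm y} y * norm y powr (-M)) \<partial>lborel)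
     \<le> (\<integral>\<^sup>+ y. (\<Sum>k. ennreal (c k * indicator (S k) y)) \<partial>lborel)"
    by (rule nn_integral_mono) (rule pt)
  also have "\<dots> = (\<Sum>k. \<integral>\<^sup>+ y. ennreal (c k * indicator (S k) y) \<partial>lborel)"
    by (rule nn_integral_suminf) measurable
  also have "\<dots> \<le> (\<Sum>k. ennreal (c k * (V * (\<rho> * 2 ^ Suc k) ^ DIM('a))))"
  proof (rule suminf_le)
    fix k
    have "(\<integral>\<^sup>+ y. ennreal (c k * indicator (S k) y) \<partial>lborel) = ennreal (c k) * emeasure lborel (S k)"
    proof -
      have "\<And>y. ennreal (c k * indicator (S k) y) = ennreal (c k) * indicator (S k) y"
        by (simp add: indicator_def)
      hence "(\<integral>\<^sup>+ y. ennreal (c k * indicator (S k) y) \<partial>lborel) = (\<integral>\<^sup>+ y. ennreal (c k) * indicator (S k) y \<partial>lborel)"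
        by presburger
      also have "\<dots> = ennreal (c k) * emeasure lborel (S k)"
        by (rule nn_integral_cmult_indicator) (use Smeas in simp)
      finally show ?thesis .
    qed
    also have "emeasure lborel (S k) \<le> emeasure lborel (cball (0::'a) (\<rho> * 2 ^ Suc k))"
      by (rule emeasure_mono) (auto simp: S_def)
    also have "\<dots> = ennreal (V * (\<rho> * 2 ^ Suc k) ^ DIM('a))"
      unfolding V_def using \<rho> by (simp add: emeasure_cball)
    finally show "(\<integral>\<^sup>+ y. ennreal (c k * indicator (S k) y) \<partial>lborel) \<le> ennreal (c k * (V * (\<rho> * 2 ^ Suc k) ^ DIM('a)))"
      using c0 by (simp add: ennreal_mult' mult_left_mono)
  qed auto
  also have "\<dots> = (\<Sum>k. ennreal (V * 2 powr DIM('a) * \<rho> powr (DIM('a) - M) * q ^ k))"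
    unfolding c_def q_def by (subst term_id2[where d = "real DIM('a)"]) (use \<rho> in auto)
  also have "\<dots> = ennreal (V * 2 powr DIM('a) * \<rho> powr (DIM('a) - M) / (1 - q))"
    by (rule geo_ennreal) (use V0 q0 in auto)
  finally show ?thesis unfolding V_def q_def by (simp add: field_simps)
qed



lemma jb_ge1: "jb t \<ge> 1" unfolding jb_def by simp
lemma jb_pos: "jb t > 0" using jb_ge1[of t] by linarith
lemma jb_ge_abs: "\<bar>t\<bar> \<le> jb t" unfolding jb_def
  by (rule real_le_rsqrt) simp
lemma jb_le: "jb t \<le> 1 + \<bar>t\<bar>" unfolding jb_def
  by (rule real_sqrt_le_iff'[THEN iffD2]) (auto simp: power2_eq_square algebra_simps)
lemma jb_mono: "\<bar>a\<bar> \<le> \<bar>b\<bar> \<Longrightarrow> jb a \<le> jb b" unfolding jb_def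
  by (simp add: abs_le_square_iff)
lemma jb_minus: "jb (-t) = jb t" unfolding jb_def by simp
lemma jb_scale: assumes "\<bar>b\<bar> \<le> c * \<bar>a\<bar>" "1 \<le> c" shows "jb b \<le> c * jb a"
proof -
  have "1 + b\<^sup>2 \<le> (c * jb a)\<^sup>2"
  proof -
    have "b\<^sup>2 \<le> (c * \<bar>a\<bar>)\<^sup>2" using power_mono[OF assms(1) abs_ge_zero, of 2] by simp
    moreover have "(c * jb a)\<^sup>2 = c\<^sup>2 * (1 + a\<^sup>2)" unfolding jb_def by (simp add: power_mult_distrib)
    moreover have "c\<^sup>2 \<ge> 1" using assms by (simp add: one_le_power)
    ultimately show ?thesis by (simp add: power_mult_distrib algebra_simps)
  qed
  thus ?thesis unfolding jb_def using assms
    by (intro real_sqrt_le_iff'[THEN iffD2]) auto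
qed
lemma jb_le_2x: "1 \<le> t \<Longrightarrow> jb t \<le> 2 * t"
  using jb_le[of t] by simp

lemma measurable_jb[measurable]: "jb \<in> borel_measurable borel"
  unfolding jb_def by measurable

lemma pw_neg: fixes u v c e :: real
  assumes "0 < u" "0 < v" "0 < c" "v \<le> c * u" "e \<le> 0"
  shows "u powr e \<le> c powr (-e) * v powr e"
proof -
  have "(c * u) powr e \<le> v powr e" by (rule powr_mono2') (use assms in auto)
  hence "c powr e * u powr e \<le> v powr e" using assms by (simp add: powr_mult)
  hence "c powr (-e) * (c powr e * u powr e) \<le> c powr (-e) * v powr e"
    by (rule mult_left_mono) simp
  thus ?thesis using assms by (simp add: powr_minus field_simps)
qed

lemma jb_powr_le1: "e \<le> 0 \<Longrightarrow> jb t powr e \<le> 1"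
  using powr_mono[of e 0 "jb t"] jb_ge1[of t] by simp



lemma powr_meas_raw[measurable (raw)]:
  "f \<in> borel_measurable M \<Longrightarrow> (\<lambda>x. f x powr (c::real)) \<in> borel_measurable M"
  by (rule powr_real_measurable) auto

lemma cball_borel[measurable]: "cball (c::'a::euclidean_space) r \<in> sets borel"
  by (simp add: borel_closed)

lemma ballX:
  fixes a :: real
  assumes "0 \<le> a" "a < real DIM('a::euclidean_space)"
  shows "\<exists>Cb\<ge>0. \<forall>(x::'a) \<rho>. 0 \<le> \<rho> \<longrightarrow>
     (\<integral>\<^sup>+ z. ennreal (if norm (x - z) \<le> \<rho> then norm (x - z) powr (-a) else 0) \<partial>lborel)
       \<le> ennreal (Cb * \<rho> powr (DIM('a) - a))"
proof -
  define Cb where "Cb = unit_ball_vol DIM('a) * 2 powr a / (1 - 2 powr (a - DIM('a)))"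
  have "2 powr (a - DIM('a)) < 1" using assms powr_less_mono[of "a - DIM('a)" 0 2] by auto
  hence Cb0: "Cb \<ge> 0" unfolding Cb_def by simp
  have "\<forall>(x::'a) \<rho>. 0 \<le> \<rho> \<longrightarrow>
     (\<integral>\<^sup>+ z. ennreal (if norm (x - z) \<le> \<rho> then norm (x - z) powr (-a) else 0) \<partial>lborel)
       \<le> ennreal (Cb * \<rho> powr (DIM('a) - a))"
  proof (intro allI impI)
    fix x :: 'a and \<rho> :: real assume \<rho>: "0 \<le> \<rho>"
    define f where "f y = ennreal (indicator (cball (0::'a) \<rho>) y * norm y powr (-a))" for y
    have fm: "f \<in> borel_measurable borel" unfolding f_def by measurable
    have "(\<integral>\<^sup>+ z. ennreal (if norm (x - z) \<le> \<rho> then norm (x - z) powr (-a) else 0) \<partial>lborel)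
        = (\<integral>\<^sup>+ z. f (x - z) \<partial>lborel)"
      by (rule nn_integral_cong) (simp add: f_def indicator_def)
    also have "\<dots> = (\<integral>\<^sup>+ y. f y \<partial>lborel)" by (rule translate_nn[OF fm])
    also have "\<dots> \<le> ennreal (Cb * \<rho> powr (DIM('a) - a))"
      unfolding f_def Cb_def using ball_pow[OF assms \<rho>] by simp
    finally show "(\<integral>\<^sup>+ z. ennreal (if norm (x - z) \<le> \<rho> then norm (x - z) powr (-a) else 0) \<partial>lborel)
       \<le> ennreal (Cb * \<rho> powr (DIM('a) - a))" .
  qed
  thus ?thesis using Cb0 by blast
qed

lemma tailX:
  fixes M :: real
  assumes "real DIM('a::euclidean_space) < M"
  shows "\<exists>Ct\<ge>0. \<forall>\<rho>. 0 < \<rho> \<longrightarrow>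
     (\<integral>\<^sup>+ z. ennreal (if \<rho> < norm z then norm (z::'a) powr (-M) else 0) \<partial>lborel)
       \<le> ennreal (Ct * \<rho> powr (DIM('a) - M))"
proof -
  define Ct where "Ct = unit_ball_vol DIM('a) * 2 powr DIM('a) / (1 - 2 powr (DIM('a) - M))"
  have "2 powr (DIM('a) - M) < 1" using assms powr_less_mono[of "DIM('a) - M" 0 2] by auto
  hence Ct0: "Ct \<ge> 0" unfolding Ct_def by simp
  have "(\<integral>\<^sup>+ z. ennreal (if \<rho> < norm z then norm (z::'a) powr (-M) else 0) \<partial>lborel)
       \<le> ennreal (Ct * \<rho> powr (DIM('a) - M))" if "0 < \<rho>" for \<rho>
  proof -
    have "(\<integral>\<^sup>+ z. ennreal (if \<rho> < norm z then norm (z::'a) powr (-M) else 0) \<partial>lborel)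
       = (\<integral>\<^sup>+ z. ennreal (indicator {y::'a. \<rho> < norm y} z * norm z powr (-M)) \<partial>lborel)"
      by (rule nn_integral_cong) (simp add: indicator_def)
    also have "\<dots> \<le> ennreal (Ct * \<rho> powr (DIM('a) - M))"
      unfolding Ct_def using tail_pow[OF assms that] by simp
    finally show ?thesis .
  qed
  thus ?thesis using Ct0 by blast
qed

lemma I0:
  fixes N :: real
  assumes "real DIM('a::euclidean_space) < N"
  shows "\<exists>K\<ge>0. (\<integral>\<^sup>+ z. ennreal (jb (norm (z::'a)) powr (-N)) \<partial>lborel) \<le> ennreal K"
proof -
  obtain Ct where Ct: "Ct \<ge> 0" "\<forall>\<rho>. 0 < \<rho> \<longrightarrow>
     (\<integral>\<^sup>+ z. ennreal (if \<rho> < norm z then norm (z::'a) powr (-N) else 0) \<partial>lborel)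
       \<le> ennreal (Ct * \<rho> powr (DIM('a) - N))" using tailX[OF assms] by blast
  define V where "V = unit_ball_vol (real DIM('a))"
  have V0: "V \<ge> 0" unfolding V_def by simp
  have N0: "N \<ge> 0" using assms by linarith
  have pt: "ennreal (jb (norm z) powr (-N)) \<le> ennreal (indicator (cball 0 1) z) + ennreal (if 1 < norm z then norm (z::'a) powr (-N) else 0)" for z
  proof (cases "1 < norm z")
    case True
    have "jb (norm z) powr (-N) \<le> norm z powr (-N)"
      by (rule powr_mono2') (use True N0 jb_ge_abs[of "norm z"] in auto)
    thus ?thesis using True by (simp add: ennreal_leI)
  next
    case False
    thus ?thesis using jb_powr_le1[of "-N" "norm z"] N0 by (simp add: indicator_def)
  qed
  have "(\<integral>\<^sup>+ z. ennreal (jb (norm (z::'a)) powr (-N)) \<partial>lborel)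
    \<le> (\<integral>\<^sup>+ z. ennreal (indicator (cball 0 1) z) + ennreal (if 1 < norm z then norm (z::'a) powr (-N) else 0) \<partial>lborel)"
    by (rule nn_integral_mono) (rule pt)
  also have "\<dots> = (\<integral>\<^sup>+ z. ennreal (indicator (cball (0::'a) 1) z) \<partial>lborel) + (\<integral>\<^sup>+ z. ennreal (if 1 < norm z then norm (z::'a) powr (-N) else 0) \<partial>lborel)"
    by (rule nn_integral_add) measurable
  also have "(\<integral>\<^sup>+ z. ennreal (indicator (cball (0::'a) 1) z) \<partial>lborel) = ennreal V"
    by (simp add: ennreal_indicator emeasure_cball V_def)
  also have "(\<integral>\<^sup>+ z. ennreal (if 1 < norm z then norm (z::'a) powr (-N) else 0) \<partial>lborel) \<le> ennreal Ct"
    using Ct(2)[rule_format, of 1] by simp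
  finally have "(\<integral>\<^sup>+ z. ennreal (jb (norm (z::'a)) powr (-N)) \<partial>lborel) \<le> ennreal (V + Ct)"
    using V0 Ct(1) by (simp add: ennreal_plus[symmetric] del: ennreal_plus)
  thus ?thesis using V0 Ct(1) by (intro exI[of _ "V + Ct"]) auto
qed



lemma tail2:
  fixes M a :: real
  assumes M0: "0 \<le> M" and a0: "0 \<le> a" and ad: "a < real DIM('a::euclidean_space)" and Mad: "real DIM('a) < M + a"
  shows "\<exists>C\<ge>0. \<forall>\<rho>\<ge>0. (\<integral>\<^sup>+ z. ennreal (if \<rho> < norm z then jb (norm (z::'a)) powr (-M) * norm z powr (-a) else 0) \<partial>lborel)
      \<le> ennreal (C * jb \<rho> powr (real DIM('a) - M - a))"
proof -
  obtain Cb where Cb: "Cb \<ge> 0" "\<forall>(x::'a) \<rho>. 0 \<le> \<rho> \<longrightarrow>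
     (\<integral>\<^sup>+ z. ennreal (if norm (x - z) \<le> \<rho> then norm (x - z) powr (-a) else 0) \<partial>lborel)
       \<le> ennreal (Cb * \<rho> powr (DIM('a) - a))" using ballX[OF a0 ad] by blast
  obtain Ct where Ct: "Ct \<ge> 0" "\<forall>\<rho>. 0 < \<rho> \<longrightarrow>
     (\<integral>\<^sup>+ z. ennreal (if \<rho> < norm z then norm (z::'a) powr (-(M+a)) else 0) \<partial>lborel)
       \<le> ennreal (Ct * \<rho> powr (DIM('a) - (M+a)))" using tailX[OF Mad] by blast
  define C where "C = (Cb + Ct) * 2 powr (M + a - DIM('a))"
  have C0: "C \<ge> 0" unfolding C_def using Cb Ct by simp
  have main: "(\<integral>\<^sup>+ z. ennreal (if \<rho> < norm z then jb (norm (z::'a)) powr (-M) * norm z powr (-a) else 0) \<partial>lborel)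
      \<le> ennreal (C * jb \<rho> powr (real DIM('a) - M - a))" if \<rho>: "\<rho> \<ge> 0" for \<rho>
  proof (cases "\<rho> \<ge> 1")
    case True
    have "(\<integral>\<^sup>+ z. ennreal (if \<rho> < norm z then jb (norm (z::'a)) powr (-M) * norm z powr (-a) else 0) \<partial>lborel)
       \<le> (\<integral>\<^sup>+ z. ennreal (if \<rho> < norm z then norm (z::'a) powr (-(M+a)) else 0) \<partial>lborel)"
    proof (rule nn_integral_mono)
      fix z :: 'a
      show "ennreal (if \<rho> < norm z then jb (norm (z::'a)) powr (-M) * norm z powr (-a) else 0)
         \<le> ennreal (if \<rho> < norm z then norm (z::'a) powr (-(M+a)) else 0)"
      proof (cases "\<rho> < norm z")
        case True
        have "jb (norm z) powr (-M) \<le> norm z powr (-M)"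
          by (rule powr_mono2') (use True \<rho> M0 jb_ge_abs[of "norm z"] in auto)
        hence "jb (norm z) powr (-M) * norm z powr (-a) \<le> norm z powr (-M) * norm z powr (-a)"
          by (rule mult_right_mono) simp
        also have "\<dots> = norm z powr (-(M+a))" by (simp add: powr_add[symmetric])
        finally show ?thesis using True by (simp add: ennreal_leI)
      qed simp
    qed
    also have "\<dots> \<le> ennreal (Ct * \<rho> powr (DIM('a) - (M+a)))" using Ct(2) True by simp
    also have "\<dots> \<le> ennreal (C * jb \<rho> powr (real DIM('a) - M - a))"
    proof (rule ennreal_leI)
      have "\<rho> powr (DIM('a) - (M+a)) \<le> 2 powr (-(DIM('a) - (M+a))) * jb \<rho> powr (DIM('a) - (M+a))"
        by (rule pw_neg) (use True Mad jb_le_2x[of \<rho>] jb_pos[of \<rho>] in auto)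
      hence "Ct * \<rho> powr (DIM('a) - (M+a)) \<le> Ct * (2 powr (-(DIM('a) - (M+a))) * jb \<rho> powr (DIM('a) - (M+a)))"
        using Ct(1) by (intro mult_left_mono)
      also have "\<dots> \<le> C * jb \<rho> powr (real DIM('a) - M - a)"
        unfolding C_def using Cb(1) by (simp add: algebra_simps mult_right_mono)
      finally show "Ct * \<rho> powr (DIM('a) - (M+a)) \<le> C * jb \<rho> powr (real DIM('a) - M - a)" .
    qed
    finally show ?thesis .
  next
    case False
    have "(\<integral>\<^sup>+ z. ennreal (if \<rho> < norm z then jb (norm (z::'a)) powr (-M) * norm z powr (-a) else 0) \<partial>lborel)
       \<le> (\<integral>\<^sup>+ z. ennreal (if norm (z::'a) \<le> 1 then norm z powr (-a) else 0) + ennreal (if 1 < norm z then norm (z::'a) powr (-(M+a)) else 0) \<partial>lborel)"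
    proof (rule nn_integral_mono)
      fix z :: 'a
      show "ennreal (if \<rho> < norm z then jb (norm (z::'a)) powr (-M) * norm z powr (-a) else 0)
         \<le> ennreal (if norm (z::'a) \<le> 1 then norm z powr (-a) else 0) + ennreal (if 1 < norm z then norm (z::'a) powr (-(M+a)) else 0)"
      proof (cases "1 < norm z")
        case True
        have "jb (norm z) powr (-M) \<le> norm z powr (-M)"
          by (rule powr_mono2') (use True \<rho> M0 jb_ge_abs[of "norm z"] in auto)
        hence "jb (norm z) powr (-M) * norm z powr (-a) \<le> norm z powr (-M) * norm z powr (-a)"
          by (rule mult_right_mono) simp
        also have "\<dots> = norm z powr (-(M+a))" by (simp add: powr_add[symmetric])
        finally show ?thesis using True by (simp add: ennreal_leI)
      next
        case False
        have "jb (norm z) powr (-M) * norm z powr (-a) \<le> 1 * norm z powr (-a)"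
          by (rule mult_right_mono) (use jb_powr_le1[of "-M"] M0 in auto)
        thus ?thesis using False by (simp add: ennreal_leI)
      qed
    qed
    also have "\<dots> = (\<integral>\<^sup>+ z. ennreal (if norm (z::'a) \<le> 1 then norm z powr (-a) else 0) \<partial>lborel)
        + (\<integral>\<^sup>+ z. ennreal (if 1 < norm z then norm (z::'a) powr (-(M+a)) else 0) \<partial>lborel)"
      by (rule nn_integral_add) measurable
    also have "\<dots> \<le> ennreal Cb + ennreal Ct"
      using Cb(2)[rule_format, of 1 0] Ct(2)[rule_format, of 1] by (intro add_mono) (auto cong: if_cong)
    also have "\<dots> = ennreal (Cb + Ct)" using Cb Ct by simp
    also have "\<dots> \<le> ennreal (C * jb \<rho> powr (real DIM('a) - M - a))"
    proof (rule ennreal_leI)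
      have "1 powr (DIM('a) - (M+a)) \<le> 2 powr (-(DIM('a) - (M+a))) * jb \<rho> powr (DIM('a) - (M+a))"
        by (rule pw_neg) (use False Mad \<rho> jb_le[of \<rho>] jb_pos[of \<rho>] in auto)
      hence "(Cb + Ct) * 1 \<le> (Cb + Ct) * (2 powr (-(DIM('a) - (M+a))) * jb \<rho> powr (DIM('a) - (M+a)))"
        using Cb(1) Ct(1) by (intro mult_left_mono) auto
      thus "Cb + Ct \<le> C * jb \<rho> powr (real DIM('a) - M - a)"
        unfolding C_def by (simp add: algebra_simps)
    qed
    finally show ?thesis .
  qed
  show ?thesis using C0 main by blast
qed



lemma nn_cmult:
  fixes f :: "'a \<Rightarrow> real"
  assumes "0 \<le> c" "f \<in> borel_measurable M"
  shows "(\<integral>\<^sup>+ z. ennreal (c * f z) \<partial>M) = ennreal c * (\<integral>\<^sup>+ z. ennreal (f z) \<partial>M)"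
  using assms by (simp add: ennreal_mult' nn_integral_cmult)

lemma ennreal_add3: "0 \<le> a \<Longrightarrow> 0 \<le> b \<Longrightarrow> 0 \<le> c \<Longrightarrow> ennreal (a + b + c) = ennreal a + ennreal b + ennreal c"
  by (simp add: ennreal_plus)

lemma tri1: "norm (x::'a::real_normed_vector) \<le> norm (x - z) + norm z"
  by (metis add.commute norm_triangle_sub)
lemma tri2: "norm (z::'a::real_normed_vector) \<le> norm x + norm (x - z)"
  by (metis norm_minus_commute norm_triangle_sub)
lemma tri3: "norm (x - z::'a::real_normed_vector) \<le> norm x + norm z"
  by (rule norm_triangle_ineq4)

lemma lemL:
  fixes N \<alpha> :: real
  assumes Nd: "real DIM('a::euclidean_space) < N" and a0: "0 \<le> \<alpha>" and ad: "\<alpha> < real DIM('a)"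
  shows "\<exists>C\<ge>0. \<forall>x::'a. (\<integral>\<^sup>+ z. ennreal (jb (norm z) powr (-N) * norm (x - z) powr (-\<alpha>)) \<partial>lborel)
           \<le> ennreal (C * jb (norm x) powr (-\<alpha>))"
proof -
  obtain Cb where Cb: "Cb \<ge> 0" "\<forall>(x::'a) \<rho>. 0 \<le> \<rho> \<longrightarrow>
     (\<integral>\<^sup>+ z. ennreal (if norm (x - z) \<le> \<rho> then norm (x - z) powr (-\<alpha>) else 0) \<partial>lborel)
       \<le> ennreal (Cb * \<rho> powr (DIM('a) - \<alpha>))" using ballX[OF a0 ad] by blast
  obtain K where K: "K \<ge> 0" "(\<integral>\<^sup>+ z. ennreal (jb (norm (z::'a)) powr (-N)) \<partial>lborel) \<le> ennreal K"
    using I0[OF Nd] by blast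
  define C where "C = 2 powr N * Cb + 3 powr \<alpha> * Cb + 3 powr \<alpha> * K"
  have C0: "C \<ge> 0" unfolding C_def using Cb K by simp
  have N0: "N \<ge> 0" using Nd by linarith
  have "(\<integral>\<^sup>+ z. ennreal (jb (norm z) powr (-N) * norm (x - z) powr (-\<alpha>)) \<partial>lborel)
           \<le> ennreal (C * jb (norm x) powr (-\<alpha>))" for x :: 'a
  proof -
    define r where "r = norm x"
    have r0: "r \<ge> 0" unfolding r_def by simp
    define A where "A = 2 powr N * jb r powr (-N)"
    define B where "B = 3 powr \<alpha> * jb r powr (-\<alpha>)"
    have A0: "A \<ge> 0" and B0: "B \<ge> 0" unfolding A_def B_def by simp_all
    define G1 where "G1 z = (if norm (x - z) \<le> r/2 then norm (x - z) powr (-\<alpha>) else 0)" for z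
    define G2 where "G2 z = (if r < 2 then (if norm (x - z) \<le> 1 then norm (x - z) powr (-\<alpha>) else 0) else 0)" for z
    define G3 where "G3 z = jb (norm z) powr (-N)" for z :: 'a
    have m1[measurable]: "G1 \<in> borel_measurable lborel" unfolding G1_def by measurable
    have m2[measurable]: "G2 \<in> borel_measurable lborel" unfolding G2_def by measurable
    have m3[measurable]: "G3 \<in> borel_measurable lborel" unfolding G3_def by measurable
    have pt: "jb (norm z) powr (-N) * norm (x - z) powr (-\<alpha>) \<le> A * G1 z + G2 z + B * G3 z" for z
    proof -
      define s where "s = norm (x - z)"
      define t where "t = norm z"
      have t1: "r \<le> s + t" "t \<le> r + s" "s \<le> r + t"
        unfolding r_def s_def t_def using tri1[of x z] tri2[of z x] tri3[of x z] by auto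
      have G0: "G1 z \<ge> 0" "G2 z \<ge> 0" "G3 z \<ge> 0" unfolding G1_def G2_def G3_def by auto
      show ?thesis
      proof (cases "s = 0")
        case True thus ?thesis using G0 A0 B0 unfolding s_def[symmetric] by (simp add: add_nonneg_nonneg)
      next
        case False
        hence s0: "s > 0" unfolding s_def by simp
        show ?thesis
        proof (cases "s \<le> r/2")
          case True
          have "jb r \<le> 2 * jb t" by (rule jb_scale) (use True t1 r0 s0 in auto)
          hence "jb t powr (-N) \<le> 2 powr (-(-N)) * jb r powr (-N)"
            by (intro pw_neg) (use N0 jb_pos in auto)
          hence "jb t powr (-N) * s powr (-\<alpha>) \<le> A * s powr (-\<alpha>)"
            unfolding A_def by (intro mult_right_mono) auto
          moreover have "G1 z = s powr (-\<alpha>)" unfolding G1_def s_def[symmetric] using True by simp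
          ultimately show ?thesis using G0 B0 unfolding s_def t_def by (smt (verit) mult_nonneg_nonneg)
        next
          case False
          note F1 = False
          show ?thesis
          proof (cases "s \<le> 1")
            case True
            have "jb t powr (-N) * s powr (-\<alpha>) \<le> 1 * s powr (-\<alpha>)"
              by (intro mult_right_mono) (use jb_powr_le1 N0 in auto)
            moreover have "G2 z = s powr (-\<alpha>)" unfolding G2_def s_def[symmetric] using True F1 by simp
            ultimately show ?thesis using G0 A0 B0 unfolding s_def t_def by (smt (verit) mult_nonneg_nonneg)
          next
            case False
            have "jb r \<le> 3 * s" using jb_le[of r] F1 False r0 by auto
            hence "s powr (-\<alpha>) \<le> 3 powr (-(-\<alpha>)) * jb r powr (-\<alpha>)"
              by (intro pw_neg) (use a0 s0 jb_pos in auto)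
            hence "jb t powr (-N) * s powr (-\<alpha>) \<le> jb t powr (-N) * B"
              unfolding B_def by (intro mult_left_mono) auto
            moreover have "G3 z = jb t powr (-N)" unfolding G3_def t_def by simp
            ultimately show ?thesis using G0 A0 B0 unfolding s_def t_def
              by (smt (verit) mult.commute mult_nonneg_nonneg)
          qed
        qed
      qed
    qed
    have "(\<integral>\<^sup>+ z. ennreal (jb (norm z) powr (-N) * norm (x - z) powr (-\<alpha>)) \<partial>lborel)
       \<le> (\<integral>\<^sup>+ z. ennreal (A * G1 z) + ennreal (G2 z) + ennreal (B * G3 z) \<partial>lborel)"
    proof (rule nn_integral_mono)
      fix z
      have "ennreal (jb (norm z) powr (-N) * norm (x - z) powr (-\<alpha>)) \<le> ennreal (A * G1 z + G2 z + B * G3 z)"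
        using pt by (rule ennreal_leI)
      also have "\<dots> = ennreal (A * G1 z) + ennreal (G2 z) + ennreal (B * G3 z)"
        by (rule ennreal_add3) (use A0 B0 in \<open>auto simp: G1_def G2_def G3_def\<close>)
      finally show "ennreal (jb (norm z) powr (-N) * norm (x - z) powr (-\<alpha>)) \<le> ennreal (A * G1 z) + ennreal (G2 z) + ennreal (B * G3 z)" .
    qed
    also have "\<dots> = (\<integral>\<^sup>+ z. ennreal (A * G1 z) \<partial>lborel) + (\<integral>\<^sup>+ z. ennreal (G2 z) \<partial>lborel) + (\<integral>\<^sup>+ z. ennreal (B * G3 z) \<partial>lborel)"
      by (simp add: nn_integral_add)
    also have "\<dots> = ennreal A * (\<integral>\<^sup>+ z. ennreal (G1 z) \<partial>lborel) + (\<integral>\<^sup>+ z. ennreal (G2 z) \<partial>lborel) + ennreal B * (\<integral>\<^sup>+ z. ennreal (G3 z) \<partial>lborel)"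
      using A0 B0 by (simp add: nn_cmult)
    also have "\<dots> \<le> ennreal A * ennreal (Cb * (r/2) powr (DIM('a) - \<alpha>)) + ennreal (Cb * (3 powr \<alpha> * jb r powr (-\<alpha>))) + ennreal B * ennreal K"
    proof (intro add_mono mult_left_mono)
      show "(\<integral>\<^sup>+ z. ennreal (G1 z) \<partial>lborel) \<le> ennreal (Cb * (r/2) powr (DIM('a) - \<alpha>))"
        unfolding G1_def using Cb(2)[rule_format, of "r/2" x] r0 by simp
      show "(\<integral>\<^sup>+ z. ennreal (G3 z) \<partial>lborel) \<le> ennreal K" unfolding G3_def using K by simp
      show "(\<integral>\<^sup>+ z. ennreal (G2 z) \<partial>lborel) \<le> ennreal (Cb * (3 powr \<alpha> * jb r powr (-\<alpha>)))"
      proof (cases "r < 2")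
        case True
        have "1 powr (-\<alpha>) \<le> 3 powr (-(-\<alpha>)) * jb r powr (-\<alpha>)"
          by (rule pw_neg) (use a0 True jb_le[of r] r0 jb_pos in auto)
        hence "Cb * 1 \<le> Cb * (3 powr \<alpha> * jb r powr (-\<alpha>))" using Cb(1) by (intro mult_left_mono) auto
        moreover have "(\<integral>\<^sup>+ z. ennreal (G2 z) \<partial>lborel) \<le> ennreal (Cb * 1 powr (DIM('a) - \<alpha>))"
          unfolding G2_def using Cb(2)[rule_format, of 1 x] True by simp
        ultimately show ?thesis by (simp add: order_trans ennreal_leI)
      next
        case False thus ?thesis unfolding G2_def by simp
      qed
    qed auto
    also have "\<dots> = ennreal (A * (Cb * (r/2) powr (DIM('a) - \<alpha>)) + Cb * (3 powr \<alpha> * jb r powr (-\<alpha>)) + B * K)"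
      using A0 B0 Cb K by (simp add: ennreal_plus ennreal_mult)
    also have "\<dots> \<le> ennreal (C * jb (norm x) powr (-\<alpha>))"
    proof (rule ennreal_leI)
      have "(r/2) powr (DIM('a) - \<alpha>) \<le> jb r powr (DIM('a) - \<alpha>)"
        by (rule powr_mono2) (use ad r0 jb_ge_abs[of r] in auto)
      hence "A * (Cb * (r/2) powr (DIM('a) - \<alpha>)) \<le> 2 powr N * Cb * (jb r powr (-N) * jb r powr (DIM('a) - \<alpha>))"
        unfolding A_def using Cb(1) by (simp add: mult_left_mono mult.assoc mult.left_commute)
      also have "jb r powr (-N) * jb r powr (DIM('a) - \<alpha>) = jb r powr (DIM('a) - \<alpha> - N)"
        by (simp add: powr_add[symmetric])
      also have "\<dots> \<le> jb r powr (-\<alpha>)" by (rule powr_mono) (use Nd jb_ge1 in auto)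
      finally have "A * (Cb * (r/2) powr (DIM('a) - \<alpha>)) \<le> 2 powr N * Cb * jb r powr (-\<alpha>)"
        using Cb(1) by (simp add: mult_left_mono)
      thus "A * (Cb * (r/2) powr (DIM('a) - \<alpha>)) + Cb * (3 powr \<alpha> * jb r powr (-\<alpha>)) + B * K \<le> C * jb (norm x) powr (-\<alpha>)"
        unfolding C_def B_def r_def[symmetric] by (simp add: algebra_simps)
    qed
    finally show ?thesis .
  qed
  thus ?thesis using C0 by blast
qed



lemma one_le_jb_neg: assumes "\<bar>u\<bar> \<le> 1" "0 \<le> e" shows "1 \<le> 2 powr e * jb u powr (-e)"
proof -
  have "1 powr (-e) \<le> 2 powr (-(-e)) * jb u powr (-e)"
    by (rule pw_neg) (use assms jb_le[of u] jb_pos in auto)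
  thus ?thesis by simp
qed

lemma lemL2:
  fixes N \<alpha> \<beta> :: real
  assumes Nd: "real DIM('a::euclidean_space) + \<beta> \<le> N" and b0: "0 < \<beta>" and a0: "0 \<le> \<alpha>" and ad: "\<alpha> < real DIM('a)"
  shows "\<exists>C\<ge>0. \<forall>(x::'a) \<rho>. 0 \<le> \<rho> \<longrightarrow>
     (\<integral>\<^sup>+ z. ennreal (if \<rho> < norm z \<and> norm z \<le> norm x / 2 then jb (norm z) powr (-N) * norm (x - z) powr (-\<alpha>) else 0) \<partial>lborel)
           \<le> ennreal (C * jb (norm x) powr (-\<alpha>) * jb \<rho> powr (-\<beta>))"
proof -
  have dpos: "real DIM('a) > 0" by simp
  have N0: "N \<ge> 0" and Nd': "real DIM('a) < N + 0" using Nd b0 dpos by linarith+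
  obtain Cb where Cb: "Cb \<ge> 0" "\<forall>(x::'a) \<rho>. 0 \<le> \<rho> \<longrightarrow>
     (\<integral>\<^sup>+ z. ennreal (if norm (x - z) \<le> \<rho> then norm (x - z) powr (-\<alpha>) else 0) \<partial>lborel)
       \<le> ennreal (Cb * \<rho> powr (DIM('a) - \<alpha>))" using ballX[OF a0 ad] by blast
  obtain C2 where C2: "C2 \<ge> 0" "\<forall>\<rho>\<ge>0. (\<integral>\<^sup>+ z. ennreal (if \<rho> < norm z then jb (norm (z::'a)) powr (-N) * norm z powr (-0) else 0) \<partial>lborel)
      \<le> ennreal (C2 * jb \<rho> powr (real DIM('a) - N - 0))"
    using tail2[OF N0 order_refl dpos Nd'] by blast
  define C where "C = 4 powr \<alpha> * C2 + Cb * 2 powr (DIM('a) - \<alpha>) * 2 powr \<alpha> * 2 powr \<beta>"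
  have C0: "C \<ge> 0" unfolding C_def using Cb C2 by simp
  have "(\<integral>\<^sup>+ z. ennreal (if \<rho> < norm z \<and> norm z \<le> norm x / 2 then jb (norm z) powr (-N) * norm (x - z) powr (-\<alpha>) else 0) \<partial>lborel)
           \<le> ennreal (C * jb (norm x) powr (-\<alpha>) * jb \<rho> powr (-\<beta>))" if \<rho>: "0 \<le> \<rho>" for x :: 'a and \<rho>
  proof -
    define r where "r = norm x"
    have r0: "r \<ge> 0" unfolding r_def by simp
    show ?thesis
    proof (cases "r \<ge> 1")
      case True
      define B where "B = 4 powr \<alpha> * jb r powr (-\<alpha>)"
      have B0: "B \<ge> 0" unfolding B_def by simp
      have "(\<integral>\<^sup>+ z. ennreal (if \<rho> < norm z \<and> norm z \<le> norm x / 2 then jb (norm z) powr (-N) * norm (x - z) powr (-\<alpha>) else 0) \<partial>lborel)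
         \<le> (\<integral>\<^sup>+ z. ennreal (B * (if \<rho> < norm z then jb (norm (z::'a)) powr (-N) * norm z powr (-0) else 0)) \<partial>lborel)"
      proof (rule nn_integral_mono, rule ennreal_leI)
        fix z :: 'a
        show "(if \<rho> < norm z \<and> norm z \<le> norm x / 2 then jb (norm z) powr (-N) * norm (x - z) powr (-\<alpha>) else 0)
          \<le> B * (if \<rho> < norm z then jb (norm (z::'a)) powr (-N) * norm z powr (-0) else 0)"
        proof (cases "\<rho> < norm z \<and> norm z \<le> norm x / 2")
          case True2: True
          have s1: "r / 2 \<le> norm (x - z)" using tri1[of x z] True2 unfolding r_def by auto
          have "jb r \<le> 4 * norm (x - z)" using jb_le_2x[of r] True s1 by auto
          hence "norm (x - z) powr (-\<alpha>) \<le> 4 powr (-(-\<alpha>)) * jb r powr (-\<alpha>)"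
            by (intro pw_neg) (use a0 s1 True jb_pos in auto)
          hence "jb (norm z) powr (-N) * norm (x - z) powr (-\<alpha>) \<le> jb (norm z) powr (-N) * B"
            unfolding B_def by (intro mult_left_mono) auto
          moreover have "z \<noteq> 0" using True2 \<rho> by auto
          ultimately show ?thesis using True2 \<rho> by (simp add: mult.commute)
        next
          case False2: False
          have "0 \<le> B * (if \<rho> < norm z then jb (norm (z::'a)) powr (-N) * norm z powr (-0) else 0)"
            using B0 by (intro mult_nonneg_nonneg) auto
          thus ?thesis by (subst if_not_P[OF False2])
        qed
      qed
      also have "\<dots> = ennreal B * (\<integral>\<^sup>+ z. ennreal (if \<rho> < norm z then jb (norm (z::'a)) powr (-N) * norm z powr (-0) else 0) \<partial>lborel)"
        by (rule nn_cmult) (use B0 in measurable)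
      also have "\<dots> \<le> ennreal B * ennreal (C2 * jb \<rho> powr (real DIM('a) - N - 0))"
        by (rule mult_left_mono) (use C2 \<rho> in auto)
      also have "\<dots> \<le> ennreal (C * jb (norm x) powr (-\<alpha>) * jb \<rho> powr (-\<beta>))"
      proof (subst ennreal_mult[symmetric], rule B0, use C2 in simp, rule ennreal_leI)
        have "jb \<rho> powr (real DIM('a) - N - 0) \<le> jb \<rho> powr (-\<beta>)"
          by (rule powr_mono) (use Nd jb_ge1 in auto)
        hence "B * (C2 * jb \<rho> powr (real DIM('a) - N - 0)) \<le> B * (C2 * jb \<rho> powr (-\<beta>))"
          using B0 C2 by (intro mult_left_mono) auto
        also have "\<dots> \<le> C * jb (norm x) powr (-\<alpha>) * jb \<rho> powr (-\<beta>)"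
          unfolding B_def C_def r_def using Cb(1)
          by (simp add: algebra_simps mult_right_mono)
        finally show "B * (C2 * jb \<rho> powr (real DIM('a) - N - 0)) \<le> C * jb (norm x) powr (-\<alpha>) * jb \<rho> powr (-\<beta>)" .
      qed
      finally show ?thesis .
    next
      case False
      show ?thesis
      proof (cases "\<rho> < 1/2")
        case False2: False
        have "(\<integral>\<^sup>+ z. ennreal (if \<rho> < norm z \<and> norm z \<le> norm x / 2 then jb (norm z) powr (-N) * norm (x - z) powr (-\<alpha>) else 0) \<partial>lborel)
            = (\<integral>\<^sup>+ z. (0::ennreal) \<partial>(lborel::'a measure))"
          by (rule nn_integral_cong) (use False False2 r_def in auto)
        thus ?thesis by simp
      next
        case True
        have "(\<integral>\<^sup>+ z. ennreal (if \<rho> < norm z \<and> norm z \<le> norm x / 2 then jb (norm z) powr (-N) * norm (x - z) powr (-\<alpha>) else 0) \<partial>lborel)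
           \<le> (\<integral>\<^sup>+ z. ennreal (if norm (x - z) \<le> 2 then norm (x - z) powr (-\<alpha>) else 0) \<partial>lborel)"
        proof (rule nn_integral_mono, rule ennreal_leI)
          fix z :: 'a
          show "(if \<rho> < norm z \<and> norm z \<le> norm x / 2 then jb (norm z) powr (-N) * norm (x - z) powr (-\<alpha>) else 0)
             \<le> (if norm (x - z) \<le> 2 then norm (x - z) powr (-\<alpha>) else 0)"
          proof (cases "\<rho> < norm z \<and> norm z \<le> norm x / 2")
            case True2: True
            have s1: "norm (x - z) \<le> 2" using tri3[of x z] True2 False unfolding r_def by auto
            have "jb (norm z) powr (-N) * norm (x - z) powr (-\<alpha>) \<le> 1 * norm (x - z) powr (-\<alpha>)"
              by (intro mult_right_mono) (use jb_powr_le1 N0 in auto)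
            thus ?thesis using True2 s1 by simp
          qed auto
        qed
        also have "\<dots> \<le> ennreal (Cb * 2 powr (DIM('a) - \<alpha>))" using Cb(2)[rule_format, of 2 x] by simp
        also have "\<dots> \<le> ennreal (C * jb (norm x) powr (-\<alpha>) * jb \<rho> powr (-\<beta>))"
        proof (rule ennreal_leI)
          have h1: "1 \<le> 2 powr \<alpha> * jb r powr (-\<alpha>)" by (rule one_le_jb_neg) (use False r0 a0 in auto)
          have h2: "1 \<le> 2 powr \<beta> * jb \<rho> powr (-\<beta>)" by (rule one_le_jb_neg) (use True \<rho> b0 in auto)
          have "1 * 1 \<le> (2 powr \<alpha> * jb r powr (-\<alpha>)) * (2 powr \<beta> * jb \<rho> powr (-\<beta>))"
            using h1 h2 by (intro mult_mono) auto
          hence "Cb * 2 powr (DIM('a) - \<alpha>) * 1 \<le> Cb * 2 powr (DIM('a) - \<alpha>) * ((2 powr \<alpha> * jb r powr (-\<alpha>)) * (2 powr \<beta> * jb \<rho> powr (-\<beta>)))"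
            using Cb(1) by (intro mult_left_mono) auto
          also have "\<dots> \<le> C * jb (norm x) powr (-\<alpha>) * jb \<rho> powr (-\<beta>)"
            unfolding C_def r_def using C2(1) by (simp add: algebra_simps)
          finally show "Cb * 2 powr (DIM('a) - \<alpha>) \<le> C * jb (norm x) powr (-\<alpha>) * jb \<rho> powr (-\<beta>)" by simp
        qed
        finally show ?thesis .
      qed
    qed
  qed
  thus ?thesis using C0 by blast
qed



lemma inv_jb_le: assumes "\<bar>b\<bar> \<le> c * \<bar>a\<bar>" "1 \<le> c" shows "inverse (jb a) \<le> c * inverse (jb b)"
proof -
  have "jb b \<le> c * jb a" by (rule jb_scale) fact+
  thus ?thesis using jb_pos[of a] jb_pos[of b] assms(2) by (simp add: field_simps)
qed

lemma powr_neg_le: assumes "\<bar>b\<bar> \<le> c * \<bar>a\<bar>" "1 \<le> c" "0 \<le> e" shows "jb a powr (-e) \<le> c powr e * jb b powr (-e)"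
proof -
  have "jb b \<le> c * jb a" by (rule jb_scale) fact+
  thus ?thesis using pw_neg[of "jb a" "jb b" c "-e"] jb_pos[of a] jb_pos[of b] assms by simp
qed

lemma pt_main:
  fixes r R s t N \<alpha> \<beta> :: real
  assumes r0: "r \<ge> 0" and R0: "R \<ge> 0" and s0: "s > 0" and t0: "t \<ge> 0"
    and tr1: "r \<le> s + t" and tr2: "s \<le> r + t" and tr3: "t \<le> r + s"
    and a0: "\<alpha> \<ge> 0" and b0: "\<beta> \<ge> 0" and N0: "N \<ge> 0"
    and Ddef: "D = \<bar>r - R\<bar>"
  shows "jb t powr (-N) * s powr (-\<alpha>) * inverse (jb (s+R)) * jb (s - R) powr (-\<beta>)
   \<le> (2 powr (1+\<beta>) * inverse (jb (r+R)) * jb D powr (-\<beta>)) * (jb t powr (-N) * s powr (-\<alpha>))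
     + (2 * inverse (jb (r+R))) * (if D/2 < t \<and> t \<le> r/2 then jb t powr (-N) * s powr (-\<alpha>) else 0)
     + 2 powr (1+\<alpha>) * (if max r D / 2 < t then jb t powr (-(N+1)) * t powr (-\<alpha>) else 0)
     + (if D < 4*r then 2 powr N * jb r powr (-N) else 0) * (if s \<le> r then s powr (-(\<alpha>+1)) else 0)"
    (is "?X \<le> ?T1 + ?T2 + ?T3 + ?T4")
proof -
  have ij: "inverse (jb u) > 0" for u using jb_pos[of u] by simp
  have ij': "inverse (jb u) \<ge> 0" for u using ij[of u] by linarith
  have jn: "jb u \<ge> 0" for u using jb_pos[of u] by linarith
  have T1: "?T1 \<ge> 0" using ij' by (intro mult_nonneg_nonneg) auto
  have T2: "?T2 \<ge> 0" using ij' by (intro mult_nonneg_nonneg) auto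
  have T3: "?T3 \<ge> 0" by simp
  have T4: "?T4 \<ge> 0" by simp
  have A: "jb t powr (-N) * s powr (-\<alpha>) \<ge> 0" by simp
  have bnd1: "jb (s - R) powr (-\<beta>) \<le> 1" by (rule jb_powr_le1) (use b0 in simp)
  show ?thesis
  proof (cases "t \<le> D/2")
    case True
    have "\<bar>r + R\<bar> \<le> 2 * \<bar>s + R\<bar>"
    proof (cases "R \<ge> r")
      case True thus ?thesis using r0 R0 s0 by auto
    next
      case False thus ?thesis using \<open>t \<le> D/2\<close> Ddef tr1 r0 R0 s0 by auto
    qed
    hence i1: "inverse (jb (s+R)) \<le> 2 * inverse (jb (r+R))" by (rule inv_jb_le) simp
    have "\<bar>D\<bar> \<le> 2 * \<bar>s - R\<bar>" using True Ddef tr1 tr2 by (auto simp: abs_if)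
    hence i2: "jb (s - R) powr (-\<beta>) \<le> 2 powr \<beta> * jb D powr (-\<beta>)" by (rule powr_neg_le) (use b0 in auto)
    have "?X \<le> (jb t powr (-N) * s powr (-\<alpha>)) * (2 * inverse (jb (r+R))) * (2 powr \<beta> * jb D powr (-\<beta>))"
      using i1 i2 A ij by (intro mult_mono; auto intro!: mult_nonneg_nonneg simp: ij' jn)
    also have "\<dots> = ?T1" by (simp add: powr_add algebra_simps)
    finally show ?thesis using T2 T3 T4 by linarith
  next
    case F1: False
    show ?thesis
    proof (cases "t \<le> r/2")
      case True
      have "\<bar>r + R\<bar> \<le> 2 * \<bar>s + R\<bar>" using True tr1 r0 R0 s0 by auto
      hence i1: "inverse (jb (s+R)) \<le> 2 * inverse (jb (r+R))" by (rule inv_jb_le) simp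
      have "?X \<le> (jb t powr (-N) * s powr (-\<alpha>)) * (2 * inverse (jb (r+R))) * 1"
        using i1 bnd1 A ij by (intro mult_mono; auto intro!: mult_nonneg_nonneg simp: ij' jn)
      also have "\<dots> = ?T2" using True F1 by simp
      finally show ?thesis using T1 T3 T4 by linarith
    next
      case F2: False
      have tpos: "t > 0" using F2 r0 by linarith
      show ?thesis
      proof (cases "s \<ge> t/2")
        case True
        have "\<bar>t\<bar> \<le> 2 * \<bar>s + R\<bar>" using True t0 s0 R0 by auto
        hence i1: "inverse (jb (s+R)) \<le> 2 * inverse (jb t)" by (rule inv_jb_le) simp
        have i3: "s powr (-\<alpha>) \<le> 2 powr (-(-\<alpha>)) * t powr (-\<alpha>)"
          by (rule pw_neg) (use True s0 tpos a0 in auto)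
        have "?X \<le> jb t powr (-N) * (2 powr \<alpha> * t powr (-\<alpha>)) * (2 * inverse (jb t)) * 1"
          using i1 i3 bnd1 ij by (intro mult_mono; auto intro!: mult_nonneg_nonneg simp: ij' jn)
        also have "\<dots> = 2 powr (1+\<alpha>) * (jb t powr (-N) * inverse (jb t) * t powr (-\<alpha>))"
          by (simp add: powr_add algebra_simps)
        also have "jb t powr (-N) * inverse (jb t) = jb t powr (-(N+1))"
        proof -
          have "jb t powr (-(N+1)) = jb t powr (-N) * jb t powr (-1)" by (simp only: powr_add[symmetric]) simp
          moreover have "jb t powr (-1) = inverse (jb t)" using jb_pos[of t] by (simp add: powr_minus)
          ultimately show ?thesis by (metis)
        qed
        also have "2 powr (1+\<alpha>) * (jb t powr (-(N+1)) * t powr (-\<alpha>)) = ?T3"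
          using F1 F2 by simp
        finally show ?thesis using T1 T2 T4 by linarith
      next
        case False
        have t2r: "t < 2*r" and sr: "s \<le> r" using False tr3 s0 by auto
        have D4: "D < 4*r" using F1 t2r by linarith
        have "\<bar>r\<bar> \<le> 2 * \<bar>t\<bar>" using F2 r0 t0 by auto
        hence i1: "jb t powr (-N) \<le> 2 powr N * jb r powr (-N)" by (rule powr_neg_le) (use N0 in auto)
        have "jb (s+R) \<ge> s" using jb_ge_abs[of "s+R"] s0 R0 by auto
        hence i2: "inverse (jb (s+R)) \<le> inverse s" using s0 by (simp add: le_imp_inverse_le)
        have "?X \<le> (2 powr N * jb r powr (-N)) * s powr (-\<alpha>) * inverse s * 1"
          using i1 i2 bnd1 ij s0 by (intro mult_mono; auto intro!: mult_nonneg_nonneg simp: ij' jn)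
        also have "s powr (-\<alpha>) * inverse s = s powr (-(\<alpha>+1))"
        proof -
          have "s powr (-(\<alpha>+1)) = s powr (-\<alpha>) * s powr (-1)" by (simp only: powr_add[symmetric]) simp
          moreover have "s powr (-1) = inverse s" using s0 by (simp add: powr_minus)
          ultimately show ?thesis by (metis)
        qed
        hence "(2 powr N * jb r powr (-N)) * s powr (-\<alpha>) * inverse s * 1 = ?T4"
          using D4 sr by (simp add: mult.assoc)
        finally show ?thesis using T1 T2 T3 by linarith
      qed
    qed
  qed
qed



lemma jb_abs: "jb \<bar>u\<bar> = jb u" unfolding jb_def by simp

lemma split3: "jb u powr (-a - 1 - b) = jb u powr (-a) * inverse (jb u) * jb u powr (-b)"
proof -
  have "jb u powr (-a - 1 - b) = jb u powr (-a) * jb u powr (-1) * jb u powr (-b)"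
    by (simp only: powr_add[symmetric]) simp
  moreover have "jb u powr (-1) = inverse (jb u)" using jb_pos[of u] by (simp add: powr_minus)
  ultimately show ?thesis by metis
qed

lemma e3:
  fixes r R D \<rho> \<alpha> \<beta> d N :: real
  assumes r0: "r \<ge> 0" and R0: "R \<ge> 0" and Dd: "D = \<bar>r - R\<bar>" and \<rho>d: "\<rho> = max r D / 2"
    and a0: "\<alpha> \<ge> 0" and b0: "\<beta> \<ge> 0" and Nd: "d + \<beta> \<le> N"
  shows "jb \<rho> powr (d - (N+1) - \<alpha>) \<le> (2 powr \<alpha> * 6 * 2 powr \<beta>) * (jb r powr (-\<alpha>) * inverse (jb (r+R)) * jb D powr (-\<beta>))"
proof -
  have "jb \<rho> powr (d - (N+1) - \<alpha>) \<le> jb \<rho> powr (-\<alpha> - 1 - \<beta>)"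
    by (rule powr_mono) (use Nd jb_ge1 in auto)
  also have "\<dots> = jb \<rho> powr (-\<alpha>) * inverse (jb \<rho>) * jb \<rho> powr (-\<beta>)" by (rule split3)
  also have "\<dots> \<le> (2 powr \<alpha> * jb r powr (-\<alpha>)) * (6 * inverse (jb (r+R))) * (2 powr \<beta> * jb D powr (-\<beta>))"
  proof (intro mult_mono)
    show "jb \<rho> powr (-\<alpha>) \<le> 2 powr \<alpha> * jb r powr (-\<alpha>)"
      by (rule powr_neg_le) (use r0 \<rho>d a0 in auto)
    show "inverse (jb \<rho>) \<le> 6 * inverse (jb (r+R))"
      by (rule inv_jb_le) (use r0 R0 \<rho>d Dd in \<open>auto simp: abs_if max_def split: if_splits\<close>)
    show "jb \<rho> powr (-\<beta>) \<le> 2 powr \<beta> * jb D powr (-\<beta>)"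
      by (rule powr_neg_le) (use r0 \<rho>d b0 Dd in auto)
  qed (use jb_pos[of r] jb_pos[of "r+R"] jb_pos[of \<rho>] in \<open>auto intro!: mult_nonneg_nonneg\<close>)
  also have "\<dots> = (2 powr \<alpha> * 6 * 2 powr \<beta>) * (jb r powr (-\<alpha>) * inverse (jb (r+R)) * jb D powr (-\<beta>))"
    by (simp add: algebra_simps)
  finally show ?thesis .
qed

lemma e4:
  fixes r R D \<alpha> \<beta> d N :: real
  assumes r0: "r \<ge> 0" and R0: "R \<ge> 0" and Dd: "D = \<bar>r - R\<bar>" and D4: "D < 4 * r"
    and a0: "\<alpha> \<ge> 0" and b0: "\<beta> \<ge> 0" and Nd: "d + \<beta> \<le> N" and ad: "\<alpha> + 1 \<le> d"
  shows "jb r powr (-N) * r powr (d - (\<alpha>+1)) \<le> (6 * 4 powr \<beta>) * (jb r powr (-\<alpha>) * inverse (jb (r+R)) * jb D powr (-\<beta>))"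
proof -
  have "r powr (d - (\<alpha>+1)) \<le> jb r powr (d - (\<alpha>+1))"
    by (rule powr_mono2) (use ad r0 jb_ge_abs[of r] in auto)
  hence "jb r powr (-N) * r powr (d - (\<alpha>+1)) \<le> jb r powr (-N) * jb r powr (d - (\<alpha>+1))"
    by (intro mult_left_mono) auto
  also have "\<dots> = jb r powr (d - (\<alpha>+1) - N)" by (simp add: powr_add[symmetric])
  also have "\<dots> \<le> jb r powr (-\<alpha> - 1 - \<beta>)" by (rule powr_mono) (use Nd jb_ge1 in auto)
  also have "\<dots> = jb r powr (-\<alpha>) * inverse (jb r) * jb r powr (-\<beta>)" by (rule split3)
  also have "\<dots> \<le> jb r powr (-\<alpha>) * (6 * inverse (jb (r+R))) * (4 powr \<beta> * jb D powr (-\<beta>))"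
  proof (intro mult_mono)
    show "inverse (jb r) \<le> 6 * inverse (jb (r+R))"
      by (rule inv_jb_le) (use r0 R0 Dd D4 in \<open>auto simp: abs_if max_def split: if_splits\<close>)
    show "jb r powr (-\<beta>) \<le> 4 powr \<beta> * jb D powr (-\<beta>)"
      by (rule powr_neg_le) (use r0 b0 Dd D4 in auto)
  qed (use jb_pos[of r] jb_pos[of "r+R"] in \<open>auto intro!: mult_nonneg_nonneg\<close>)
  also have "\<dots> = (6 * 4 powr \<beta>) * (jb r powr (-\<alpha>) * inverse (jb (r+R)) * jb D powr (-\<beta>))"
    by (simp add: algebra_simps)
  finally show ?thesis .
qed



lemma main_gen:
  fixes \<alpha> \<beta> N :: real
  assumes b1: "\<beta> \<ge> 1" and a0: "0 \<le> \<alpha>" and ad: "\<alpha> + 1 < real DIM('a::euclidean_space)"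
    and Nd: "N \<ge> real DIM('a) + \<beta>"
  shows "\<exists>C>0. \<forall>(x::'a) R. R \<ge> 0 \<longrightarrow>
    (\<integral>\<^sup>+ z. ennreal (jb (norm z) powr (-N) /
        (norm (x - z) powr \<alpha> * jb (norm (x - z) + R) * jb (norm (x - z) - R) powr \<beta>)) \<partial>lborel)
    \<le> ennreal (C / (jb (norm x) powr \<alpha> * jb (norm x + R) * jb (R - norm x) powr \<beta>))"
proof -
  define d where "d = real DIM('a)"
  have b0: "\<beta> \<ge> 0" and b0': "\<beta> > 0" using b1 by linarith+
  have adl: "\<alpha> < d" using ad unfolding d_def by linarith
  have Nd1: "d < N" using Nd b1 unfolding d_def by linarith
  have N0: "N \<ge> 0" using Nd1 unfolding d_def by simp
  obtain CL where CL: "CL \<ge> 0" "\<forall>x::'a. (\<integral>\<^sup>+ z. ennreal (jb (norm z) powr (-N) * norm (x - z) powr (-\<alpha>)) \<partial>lborel)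
           \<le> ennreal (CL * jb (norm x) powr (-\<alpha>))"
    using lemL[of N \<alpha>] Nd1 a0 adl unfolding d_def by blast
  obtain CL2 where CL2: "CL2 \<ge> 0" "\<forall>(x::'a) \<rho>. 0 \<le> \<rho> \<longrightarrow>
     (\<integral>\<^sup>+ z. ennreal (if \<rho> < norm z \<and> norm z \<le> norm x / 2 then jb (norm z) powr (-N) * norm (x - z) powr (-\<alpha>) else 0) \<partial>lborel)
           \<le> ennreal (CL2 * jb (norm x) powr (-\<alpha>) * jb \<rho> powr (-\<beta>))"
    using lemL2[of \<beta> N \<alpha>] Nd b0' a0 adl unfolding d_def by blast
  obtain C3 where C3: "C3 \<ge> 0" "\<forall>\<rho>\<ge>0. (\<integral>\<^sup>+ z. ennreal (if \<rho> < norm z then jb (norm (z::'a)) powr (-(N+1)) * norm z powr (-\<alpha>) else 0) \<partial>lborel)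
      \<le> ennreal (C3 * jb \<rho> powr (real DIM('a) - (N+1) - \<alpha>))"
    using tail2[where 'a='a, of "N+1" \<alpha>] N0 a0 adl Nd1 unfolding d_def by auto
  obtain Cb where Cb: "Cb \<ge> 0" "\<forall>(x::'a) \<rho>. 0 \<le> \<rho> \<longrightarrow>
     (\<integral>\<^sup>+ z. ennreal (if norm (x - z) \<le> \<rho> then norm (x - z) powr (-(\<alpha>+1)) else 0) \<partial>lborel)
       \<le> ennreal (Cb * \<rho> powr (DIM('a) - (\<alpha>+1)))"
    using ballX[where 'a='a, of "\<alpha>+1"] a0 ad by auto
  define C where "C = 2 powr (1+\<beta>) * CL + 2 * CL2 * 2 powr \<beta> + 2 powr (1+\<alpha>) * C3 * (2 powr \<alpha> * 6 * 2 powr \<beta>)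
     + 2 powr N * Cb * (6 * 4 powr \<beta>) + 1"
  have C0: "C > 0" unfolding C_def using CL CL2 C3 Cb
    by (simp add: add_nonneg_nonneg add_nonneg_pos)
  have main: "(\<integral>\<^sup>+ z. ennreal (jb (norm z) powr (-N) /
        (norm (x - z) powr \<alpha> * jb (norm (x - z) + R) * jb (norm (x - z) - R) powr \<beta>)) \<partial>lborel)
    \<le> ennreal (C / (jb (norm x) powr \<alpha> * jb (norm x + R) * jb (R - norm x) powr \<beta>))"
    if R0: "R \<ge> 0" for x :: 'a and R
  proof -
    define r where "r = norm x"
    have r0: "r \<ge> 0" unfolding r_def by simp
    define D where "D = \<bar>r - R\<bar>"
    have D0: "D \<ge> 0" unfolding D_def by simp
    define \<rho>3 where "\<rho>3 = max r D / 2"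
    have \<rho>30: "\<rho>3 \<ge> 0" unfolding \<rho>3_def using r0 by simp
    define T where "T = jb r powr (-\<alpha>) * inverse (jb (r+R)) * jb D powr (-\<beta>)"
    have ij: "inverse (jb u) \<ge> 0" for u using jb_pos[of u] by simp
    have T0: "T \<ge> 0" unfolding T_def using ij by (intro mult_nonneg_nonneg) auto
    define k1 where "k1 = 2 powr (1+\<beta>) * inverse (jb (r+R)) * jb D powr (-\<beta>)"
    define k2 where "k2 = 2 * inverse (jb (r+R))"
    define k3 where "k3 = 2 powr (1+\<alpha>)"
    define k4 where "k4 = (if D < 4*r then 2 powr N * jb r powr (-N) else 0)"
    have k0: "k1 \<ge> 0" "k2 \<ge> 0" "k3 \<ge> 0" "k4 \<ge> 0" unfolding k1_def k2_def k3_def k4_def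
      using ij by (auto intro!: mult_nonneg_nonneg)
    define H1 where "H1 z = jb (norm z) powr (-N) * norm (x - z) powr (-\<alpha>)" for z
    define H2 where "H2 z = (if D/2 < norm z \<and> norm z \<le> norm x / 2 then jb (norm z) powr (-N) * norm (x - z) powr (-\<alpha>) else 0)" for z
    define H3 where "H3 z = (if \<rho>3 < norm z then jb (norm (z::'a)) powr (-(N+1)) * norm z powr (-\<alpha>) else 0)" for z
    define H4 where "H4 z = (if norm (x - z) \<le> r then norm (x - z) powr (-(\<alpha>+1)) else 0)" for z
    have Hm1[measurable]: "H1 \<in> borel_measurable lborel" unfolding H1_def by measurable
    have Hm2[measurable]: "H2 \<in> borel_measurable lborel" unfolding H2_def by measurable
    have Hm3[measurable]: "H3 \<in> borel_measurable lborel" unfolding H3_def by measurable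
    have Hm4[measurable]: "H4 \<in> borel_measurable lborel" unfolding H4_def by measurable
    have H0: "H1 z \<ge> 0" "H2 z \<ge> 0" "H3 z \<ge> 0" "H4 z \<ge> 0" for z
      unfolding H1_def H2_def H3_def H4_def by simp_all
    have pt: "jb (norm z) powr (-N) / (norm (x - z) powr \<alpha> * jb (norm (x - z) + R) * jb (norm (x - z) - R) powr \<beta>)
       \<le> k1 * H1 z + k2 * H2 z + k3 * H3 z + k4 * H4 z" for z
    proof (cases "x = z")
      case True
      thus ?thesis using k0 H0 by (simp add: add_nonneg_nonneg)
    next
      case False
      define s where "s = norm (x - z)"
      define t where "t = norm z"
      have s0: "s > 0" unfolding s_def using False by simp
      have "jb (norm z) powr (-N) / (norm (x - z) powr \<alpha> * jb (norm (x - z) + R) * jb (norm (x - z) - R) powr \<beta>)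
         = jb t powr (-N) * s powr (-\<alpha>) * inverse (jb (s+R)) * jb (s - R) powr (-\<beta>)"
        unfolding s_def[symmetric] t_def[symmetric] by (simp add: powr_minus divide_inverse mult.assoc)
      also have "\<dots> \<le> (2 powr (1+\<beta>) * inverse (jb (r+R)) * jb D powr (-\<beta>)) * (jb t powr (-N) * s powr (-\<alpha>))
     + (2 * inverse (jb (r+R))) * (if D/2 < t \<and> t \<le> r/2 then jb t powr (-N) * s powr (-\<alpha>) else 0)
     + 2 powr (1+\<alpha>) * (if max r D / 2 < t then jb t powr (-(N+1)) * t powr (-\<alpha>) else 0)
     + (if D < 4*r then 2 powr N * jb r powr (-N) else 0) * (if s \<le> r then s powr (-(\<alpha>+1)) else 0)"
        by (rule pt_main[OF r0 R0 s0 _ _ _ _ a0 b0 N0 D_def])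
           (use tri1[of x z] tri2[of z x] tri3[of x z] in \<open>auto simp: r_def s_def t_def\<close>)
      also have "\<dots> = k1 * H1 z + k2 * H2 z + k3 * H3 z + k4 * H4 z"
        unfolding k1_def k2_def k3_def k4_def H1_def H2_def H3_def H4_def \<rho>3_def s_def t_def r_def by simp
      finally show ?thesis .
    qed
    have "(\<integral>\<^sup>+ z. ennreal (jb (norm z) powr (-N) /
        (norm (x - z) powr \<alpha> * jb (norm (x - z) + R) * jb (norm (x - z) - R) powr \<beta>)) \<partial>lborel)
      \<le> (\<integral>\<^sup>+ z. ennreal (k1 * H1 z) + ennreal (k2 * H2 z) + ennreal (k3 * H3 z) + ennreal (k4 * H4 z) \<partial>lborel)"
    proof (rule nn_integral_mono)
      fix z
      have "ennreal (jb (norm z) powr (-N) / (norm (x - z) powr \<alpha> * jb (norm (x - z) + R) * jb (norm (x - z) - R) powr \<beta>))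
          \<le> ennreal (k1 * H1 z + k2 * H2 z + k3 * H3 z + k4 * H4 z)" using pt by (rule ennreal_leI)
      also have "\<dots> = ennreal (k1 * H1 z) + ennreal (k2 * H2 z) + ennreal (k3 * H3 z) + ennreal (k4 * H4 z)"
        using k0 H0[of z] by (simp add: ennreal_plus add_nonneg_nonneg)
      finally show "ennreal (jb (norm z) powr (-N) / (norm (x - z) powr \<alpha> * jb (norm (x - z) + R) * jb (norm (x - z) - R) powr \<beta>))
          \<le> ennreal (k1 * H1 z) + ennreal (k2 * H2 z) + ennreal (k3 * H3 z) + ennreal (k4 * H4 z)" .
    qed
    also have "\<dots> = (\<integral>\<^sup>+ z. ennreal (k1 * H1 z) \<partial>lborel) + (\<integral>\<^sup>+ z. ennreal (k2 * H2 z) \<partial>lborel)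
        + (\<integral>\<^sup>+ z. ennreal (k3 * H3 z) \<partial>lborel) + (\<integral>\<^sup>+ z. ennreal (k4 * H4 z) \<partial>lborel)"
      by (simp add: nn_integral_add)
    also have "\<dots> = ennreal k1 * (\<integral>\<^sup>+ z. ennreal (H1 z) \<partial>lborel) + ennreal k2 * (\<integral>\<^sup>+ z. ennreal (H2 z) \<partial>lborel)
        + ennreal k3 * (\<integral>\<^sup>+ z. ennreal (H3 z) \<partial>lborel) + ennreal k4 * (\<integral>\<^sup>+ z. ennreal (H4 z) \<partial>lborel)"
      using k0 by (simp add: nn_cmult)
    also have "\<dots> \<le> ennreal k1 * ennreal (CL * jb r powr (-\<alpha>)) + ennreal k2 * ennreal (CL2 * jb r powr (-\<alpha>) * jb (D/2) powr (-\<beta>))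
        + ennreal k3 * ennreal (C3 * jb \<rho>3 powr (real DIM('a) - (N+1) - \<alpha>)) + ennreal k4 * ennreal (Cb * r powr (DIM('a) - (\<alpha>+1)))"
    proof (intro add_mono mult_left_mono order_refl)
      show "(\<integral>\<^sup>+ z. ennreal (H1 z) \<partial>lborel) \<le> ennreal (CL * jb r powr (-\<alpha>))"
        unfolding H1_def r_def using CL(2) by simp
      show "(\<integral>\<^sup>+ z. ennreal (H2 z) \<partial>lborel) \<le> ennreal (CL2 * jb r powr (-\<alpha>) * jb (D/2) powr (-\<beta>))"
        unfolding H2_def r_def using CL2(2)[rule_format, of "D/2" x] D0 by simp
      show "(\<integral>\<^sup>+ z. ennreal (H3 z) \<partial>lborel) \<le> ennreal (C3 * jb \<rho>3 powr (real DIM('a) - (N+1) - \<alpha>))"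
        unfolding H3_def using C3(2) \<rho>30 by simp
      show "(\<integral>\<^sup>+ z. ennreal (H4 z) \<partial>lborel) \<le> ennreal (Cb * r powr (DIM('a) - (\<alpha>+1)))"
        unfolding H4_def using Cb(2) r0 by simp
    qed auto
    also have "\<dots> = ennreal (k1 * (CL * jb r powr (-\<alpha>)) + k2 * (CL2 * jb r powr (-\<alpha>) * jb (D/2) powr (-\<beta>))
        + k3 * (C3 * jb \<rho>3 powr (real DIM('a) - (N+1) - \<alpha>)) + k4 * (Cb * r powr (DIM('a) - (\<alpha>+1))))"
      using k0 CL(1) CL2(1) C3(1) Cb(1) by (simp add: ennreal_plus ennreal_mult add_nonneg_nonneg)
    also have "\<dots> \<le> ennreal (C * T)"
    proof (rule ennreal_leI)
      have b1': "k1 * (CL * jb r powr (-\<alpha>)) = 2 powr (1+\<beta>) * CL * T"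
        unfolding k1_def T_def by (simp add: algebra_simps)
      have "jb (D/2) powr (-\<beta>) \<le> 2 powr \<beta> * jb D powr (-\<beta>)"
        by (rule powr_neg_le) (use b0 in auto)
      hence "(2 * CL2 * inverse (jb (r+R)) * jb r powr (-\<alpha>)) * jb (D/2) powr (-\<beta>)
           \<le> (2 * CL2 * inverse (jb (r+R)) * jb r powr (-\<alpha>)) * (2 powr \<beta> * jb D powr (-\<beta>))"
        using CL2(1) ij[of "r+R"] by (intro mult_left_mono) auto
      hence b2': "k2 * (CL2 * jb r powr (-\<alpha>) * jb (D/2) powr (-\<beta>)) \<le> 2 * CL2 * 2 powr \<beta> * T"
        unfolding k2_def T_def by (simp add: algebra_simps)
      have "jb \<rho>3 powr (real DIM('a) - (N+1) - \<alpha>) \<le> (2 powr \<alpha> * 6 * 2 powr \<beta>) * T"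
        unfolding T_def by (rule e3[OF r0 R0 D_def \<rho>3_def a0 b0]) (use Nd in simp)
      hence b3': "k3 * (C3 * jb \<rho>3 powr (real DIM('a) - (N+1) - \<alpha>)) \<le> 2 powr (1+\<alpha>) * C3 * (2 powr \<alpha> * 6 * 2 powr \<beta>) * T"
        unfolding k3_def using C3(1) by (simp add: algebra_simps mult_left_mono)
      have b4': "k4 * (Cb * r powr (DIM('a) - (\<alpha>+1))) \<le> 2 powr N * Cb * (6 * 4 powr \<beta>) * T"
      proof (cases "D < 4*r")
        case True
        have "jb r powr (-N) * r powr (DIM('a) - (\<alpha>+1)) \<le> (6 * 4 powr \<beta>) * T"
          unfolding T_def by (rule e4[OF r0 R0 D_def True a0 b0]) (use Nd ad in auto)
        thus ?thesis unfolding k4_def using True Cb(1)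
          by (simp add: algebra_simps mult_left_mono)
      next
        case False thus ?thesis unfolding k4_def using Cb(1) T0 by simp
      qed
      have "2 powr (1+\<beta>) * CL * T + 2 * CL2 * 2 powr \<beta> * T + 2 powr (1+\<alpha>) * C3 * (2 powr \<alpha> * 6 * 2 powr \<beta>) * T
          + 2 powr N * Cb * (6 * 4 powr \<beta>) * T \<le> C * T"
        unfolding C_def using T0 by (simp add: algebra_simps)
      thus "k1 * (CL * jb r powr (-\<alpha>)) + k2 * (CL2 * jb r powr (-\<alpha>) * jb (D/2) powr (-\<beta>))
        + k3 * (C3 * jb \<rho>3 powr (real DIM('a) - (N+1) - \<alpha>)) + k4 * (Cb * r powr (DIM('a) - (\<alpha>+1))) \<le> C * T"
        using b1' b2' b3' b4' by linarith
    qed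
    also have "C * T = C / (jb (norm x) powr \<alpha> * jb (norm x + R) * jb (R - norm x) powr \<beta>)"
    proof -
      have "jb (R - norm x) = jb D" unfolding D_def r_def by (metis jb_abs abs_minus_commute)
      thus ?thesis unfolding T_def r_def by (simp add: powr_minus divide_inverse)
    qed
    finally show ?thesis .
  qed
  show ?thesis using C0 main by blast
qed


theorem mainTheorem12:
  fixes n :: nat and \<alpha> \<beta> N :: real
  assumes "CARD('n::finite) = n" and "n \<ge> 3"
    and "\<beta> \<ge> 1" and "0 \<le> \<alpha>" and "\<alpha> < real n - 1" and "N \<ge> real n + \<beta>"
  shows "\<exists>C>0. \<forall>(x::real^'n) R. R \<ge> 0 \<longrightarrow>
    (\<integral>\<^sup>+ z. ennreal (jb (norm z) powr (-N) /
        (norm (x - z) powr \<alpha> * jb (norm (x - z) + R) * jb (norm (x - z) - R) powr \<beta>)) \<partial>lborel)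
    \<le> ennreal (C / (jb (norm x) powr \<alpha> * jb (norm x + R) * jb (R - norm x) powr \<beta>))"
proof -
  have d: "DIM(real^'n) = n" using assms(1) by simp
  show ?thesis
    by (rule main_gen[where 'a="real^'n"]) (use assms d in auto)
qed

end
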